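(* For $\kappa>0$ set $r_0(\kappa)=\sqrt{\kappa+1}-\sqrt{\kappa}$, $$\mu_0(\kappa)=\frac{1+\sqrt{\kappa}-\sqrt{1+\kappa}}{1-\sqrt{\kappa}+\sqrt{1+\kappa}},\qquad t_\kappa(r)=\int_{r_0(\kappa)}^{r}\frac{2\,du}{\sqrt{4\kappa u^2-(1-u^2)^2}}\ \ (r_0(\kappa)\le r<1),$$ and for $z=x+{\rm i}y$ with $x\in\mathbb{R}$, $0<y<1$, set $t_\kappa(x,y)=t_\kappa\big(|g^{-1}(\mu_0(\kappa)z)|\big)$, where $g^{-1}(w)=\frac{{\rm i}-w}{{\rm i}+w}$ (this is defined for all sufficiently small $\kappa$, depending on $(x,y)$). Then for each fixed $(x,y)$, as $\kappa\to0^+$, $$t_\kappa(x,y)=\arccos y+\frac{\kappa}{4}\Big(\frac{x^2y}{\sqrt{1-y^2}}-\arccos y\Big)+o(\kappa).$$ Consequently the graphs $\Phi_\kappa(x,y)=(x,y,t_\kappa(x,y))$ converge to $\Phi_0(x,y)=(x,y,\arccos y)$, which parametrizes half of a parabolic catenoid in $\mathfrak{H}\times\mathbb{R}$, and the normal component of $\frac{d\Phi_\kappa}{d\kappa}\big|_{\kappa=0}$ with respect to the unit normal $\nu=(0,-y^2,-\sqrt{1-y^2})$ is $$w(x,y)=\tfrac14\big(\sqrt{1-y^2}\,\arccos y-x^2y\big).$$ In the parametrization $\widehat F(x,t)=(x,\cos t,t)$, $(x,t)\in\mathbb{R}\times(-\pi/2,\pi/2)$, of the full parabolic catenoid, this Jacobi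 field is $w(x,t)=\frac14(t\sin t-x^2\cos t)$, and it satisfies the Jacobi equation $(\partial_x^2+\partial_t^2+1)w=0$; equivalently, on the parametrization $(x,t)\mapsto(x,\sin t,t)$, $t\in(0,\pi)$, the corresponding Jacobi field is $\frac18\big((\pi-2t)\cos t-2x^2\sin t\big)$.
   Context: $\mathfrak{H}=\{x+{\rm i}y:y>0\}$ with metric $\frac{dx^2+dy^2}{y^2}$ and $\mathbb{D}=\{|z|<1\}$ with metric $\frac{4|dz|^2}{(1-|z|^2)^2}$ are models of $\mathbb{H}^2$, related by the isometry $g(z)={\rm i}\frac{1-z}{1+z}$; $\mathfrak{H}\times\mathbb{R}$ has the product metric with $dt^2$. For each $\kappa>0$, $r\mapsto t_\kappa(r)$, $r\in[r_0(\kappa),1)$, describes (as $t=\pm t_\kappa(|z|)$ over the annulus $r_0\le|z|<1$ in $\mathbb{D}$) the minimal catenoid of revolution in $\mathbb{H}^2\times\mathbb{R}$ with neck radius (Euclidean, in $\mathbb{D}$) $r_0(\kappa)$, and $(x,y)\mapsto(x,y,t_\kappa(x,y))$ is the upper half of the image of this catenoid under $g$ followed by the hyperbolic dilation $z\mapsto z/\mu_0(\kappa)$ of $\mathfrak{H}$. *)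

theory Defs
  imports "HOL-Analysis.Analysis" "HOL-Library.Landau_Symbols"
begin

text \<open>Neck radius r_0(kappa) of the catenoid, in the disk model.\<close>
definition r0 :: "real \<Rightarrow> real" where
  "r0 k = sqrt (k + 1) - sqrt k"

definition mu0 :: "real \<Rightarrow> real" where
  "mu0 k = (1 + sqrt k - sqrt (1 + k)) / (1 - sqrt k + sqrt (1 + k))"

text \<open>Radial profile t_kappa(r) = int_{r_0}^r 2 du / sqrt(4 kappa u^2 - (1-u^2)^2)
  (Henstock-Kurzweil integral, which covers the integrable endpoint singularity at r_0).\<close>
definition t_rad :: "real \<Rightarrow> real \<Rightarrow> real" where
  "t_rad k r = integral {r0 k..r} (\<lambda>u. 2 / sqrt (4 * k * u\<^sup>2 - (1 - u\<^sup>2)\<^sup>2))"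

text \<open>Inverse of the isometry g(z) = i(1-z)/(1+z) from the disk to the half-plane.\<close>
definition ginv :: "complex \<Rightarrow> complex" where
  "ginv w = (\<i> - w) / (\<i> + w)"

definition t_xy :: "real \<Rightarrow> real \<Rightarrow> real \<Rightarrow> real" where
  "t_xy k x y = t_rad k (cmod (ginv (complex_of_real (mu0 k) * Complex x y)))"

definition Phi :: "real \<Rightarrow> real \<Rightarrow> real \<Rightarrow> real \<times> real \<times> real" where
  "Phi k x y = (x, y, if k = 0 then arccos y else t_xy k x y)"

text \<open>Riemannian inner product of H x R (metric (dx^2+dy^2)/y^2 + dt^2) at a point with
  second coordinate y.\<close>
definition hprod :: "real \<Rightarrow> real \<times> real \<times> real \<Rightarrow> real \<times> real \<times> real \<Rightarrow> real" where
  "hprod y v u = (fst v * fst u + fst (snd v) * fst (snd u)) / y\<^sup>2 + snd (snd v) * snd (snd u)"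

definition nu :: "real \<Rightarrow> real \<times> real \<times> real" where
  "nu y = (0, - (y\<^sup>2), - sqrt (1 - y\<^sup>2))"

definition wJ :: "real \<Rightarrow> real \<Rightarrow> real" where
  "wJ x y = (1/4) * (sqrt (1 - y\<^sup>2) * arccos y - x\<^sup>2 * y)"

definition wF :: "real \<Rightarrow> real \<Rightarrow> real" where
  "wF x t = (1/4) * (t * sin t - x\<^sup>2 * cos t)"

definition wS :: "real \<Rightarrow> real \<Rightarrow> real" where
  "wS x t = (1/8) * ((pi - 2 * t) * cos t - 2 * x\<^sup>2 * sin t)"

end

theory Submission
  imports Defs
begin


definition Aint :: "real \<Rightarrow> real \<Rightarrow> real" where
  "Aint k p = integral {0..p} (\<lambda>\<theta>. 1 / sqrt (1 + k * (cos \<theta>)\<^sup>2))"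

lemma Aint_integrand_cont: "k \<ge> 0 \<Longrightarrow> continuous_on S (\<lambda>\<theta>. 1 / sqrt (1 + k * (cos \<theta>)\<^sup>2))"
proof -
  assume k: "k \<ge> 0"
  have "\<And>\<theta>. sqrt (1 + k * (cos \<theta>)\<^sup>2) \<noteq> 0"
    using k by (metis add_pos_nonneg mult_nonneg_nonneg real_sqrt_gt_zero zero_le_power2 zero_less_one order_less_irrefl)
  then show ?thesis by (intro continuous_intros) auto
qed

lemma Aint_deriv_within:
  assumes "k \<ge> 0" "p \<in> {0..pi}"
  shows "(Aint k has_vector_derivative 1 / sqrt (1 + k * (cos p)\<^sup>2)) (at p within {0..pi})"
  unfolding Aint_def[abs_def]
  by (rule integral_has_vector_derivative[OF Aint_integrand_cont[OF assms(1)] assms(2)])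

lemma Aint_deriv:
  assumes "k \<ge> 0" "0 < p" "p < pi"
  shows "(Aint k has_real_derivative 1 / sqrt (1 + k * (cos p)\<^sup>2)) (at p)"
proof -
  have "p \<in> interior {0..pi}" using assms by auto
  then have "at p within {0..pi} = at p" by (rule at_within_interior)
  then show ?thesis using Aint_deriv_within[of k p] assms
    by (simp add: has_real_derivative_iff_has_vector_derivative)
qed

lemma Aint_cont: assumes "k \<ge> 0" shows "continuous_on {0..pi} (Aint k)"
  unfolding continuous_on_eq_continuous_within
  using Aint_deriv_within[OF assms] has_vector_derivative_continuous by blast

lemma r0_pos: "k \<ge> 0 \<Longrightarrow> 0 < r0 k"
  unfolding r0_def by (simp add: real_sqrt_less_iff)

lemma r0_ident:
  assumes "k \<ge> 0"
  shows "u\<^sup>2 + 2 * sqrt k * u - 1 = (u - r0 k) * (u + sqrt k + sqrt (k + 1))"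
proof -
  have "(sqrt (k+1))\<^sup>2 = k + 1" "(sqrt k)\<^sup>2 = k" using assms by auto
  then show ?thesis unfolding r0_def by (simp add: algebra_simps power2_eq_square)
qed

lemma sigma_bounds:
  assumes "k > 0" "r0 k < u" "u < 1"
  shows "0 < (1 - u\<^sup>2) / (2 * sqrt k * u)" "(1 - u\<^sup>2) / (2 * sqrt k * u) < 1"
proof -
  have u: "u > 0" using r0_pos[of k] assms by auto
  have u1: "u\<^sup>2 < 1" using u assms by (simp add: power2_eq_square) (metis mult_strict_mono' less_eq_real_def mult_1 u)
  show "0 < (1 - u\<^sup>2) / (2 * sqrt k * u)" using u u1 assms by simp
  have "0 < u + sqrt k + sqrt (k + 1)" using u assms by (smt (verit) real_sqrt_ge_zero)
  then have "(u - r0 k) * (u + sqrt k + sqrt (k + 1)) > 0" using assms u by (intro mult_pos_pos) auto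
  then have "1 - u\<^sup>2 < 2 * sqrt k * u" using r0_ident[of k u] assms by simp
  then show "(1 - u\<^sup>2) / (2 * sqrt k * u) < 1" using u assms by simp
qed

lemma sigma_r0: assumes "k > 0" shows "(1 - (r0 k)\<^sup>2) / (2 * sqrt k * r0 k) = 1"
proof -
  have "(r0 k)\<^sup>2 + 2 * sqrt k * r0 k - 1 = 0" using r0_ident[of k "r0 k"] assms by simp
  then show ?thesis using r0_pos[of k] assms by (simp add: field_simps)
qed

lemma alg1:
  fixes Q s u w :: real assumes "Q > 0" "s > 0" "u > 0" "w > 0"
  shows "1 / (w / (2 * u)) * (inverse (- (Q / (2 * s * u))) * (- w / (2 * s * u\<^sup>2))) = 2 / Q"
  using assms by (simp add: field_simps power2_eq_square)

lemma t_rad_eq: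
  assumes k: "k > 0" and r: "r0 k \<le> r" "r < 1"
  shows "t_rad k r = Aint k (arccos ((1 - r\<^sup>2) / (2 * sqrt k * r)))"
proof -
  define \<sigma> where "\<sigma> u = (1 - u\<^sup>2) / (2 * sqrt k * u)" for u
  define \<Phi> where "\<Phi> u = Aint k (arccos (\<sigma> u))" for u
  have pos: "0 < u" if "u \<in> {r0 k..r}" for u using that r0_pos[of k] k by auto
  have sig01: "0 \<le> \<sigma> u \<and> \<sigma> u \<le> 1" if "u \<in> {r0 k..r}" for u
  proof (cases "u = r0 k")
    case True then show ?thesis using sigma_r0[OF k] unfolding \<sigma>_def by simp
  next
    case False then show ?thesis using sigma_bounds[OF k, of u] that r unfolding \<sigma>_def by auto
  qed
  have cont: "continuous_on {r0 k..r} \<Phi>"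
  proof -
    have "\<forall>u\<in>{r0 k..r}. 2 * sqrt k * u \<noteq> 0" using pos k by (metis mult_pos_pos order_less_irrefl real_sqrt_gt_zero zero_less_numeral)
    then have c1: "continuous_on {r0 k..r} \<sigma>" unfolding \<sigma>_def
      by (intro continuous_intros) auto
    have c2: "continuous_on {r0 k..r} (\<lambda>u. arccos (\<sigma> u))"
      by (rule continuous_on_compose2[OF continuous_on_arccos' c1]) (use sig01 in fastforce)
    have "continuous_on {r0 k..r} (\<lambda>u. Aint k (arccos (\<sigma> u)))"
      by (rule continuous_on_compose2[OF Aint_cont c2]) (use k in \<open>auto intro!: arccos_lbound arccos_ubound dest!: sig01\<close>)
    then show ?thesis unfolding \<Phi>_def .
  qed
  have der: "(\<Phi> has_vector_derivative (\<lambda>u. 2 / sqrt (4 * k * u\<^sup>2 - (1 - u\<^sup>2)\<^sup>2)) u) (at u)"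
    if u: "u \<in> {r0 k<..<r}" for u
  proof -
    have u0: "0 < u" using u r0_pos[of k] k by auto
    have s0: "0 < \<sigma> u" "\<sigma> u < 1" using sigma_bounds[OF k, of u] u r unfolding \<sigma>_def by auto
    have dsig: "(\<sigma> has_real_derivative - (1 + u\<^sup>2) / (2 * sqrt k * u\<^sup>2)) (at u)"
      unfolding \<sigma>_def
      apply (rule derivative_eq_intros refl)+
      using u0 k by (auto simp: field_simps power2_eq_square)
    have darc: "(arccos has_real_derivative inverse (- sqrt (1 - (\<sigma> u)\<^sup>2))) (at (\<sigma> u))"
      using s0 by (intro DERIV_arccos) auto
    have ar: "0 < arccos (\<sigma> u)" "arccos (\<sigma> u) < pi"
      using arccos_lt_bounded[of "\<sigma> u"] s0 by auto
    have dA: "(Aint k has_real_derivative 1 / sqrt (1 + k * (cos (arccos (\<sigma> u)))\<^sup>2)) (at (arccos (\<sigma> u)))"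
      using k ar by (intro Aint_deriv) auto
    have chain: "(\<Phi> has_real_derivative
        1 / sqrt (1 + k * (cos (arccos (\<sigma> u)))\<^sup>2) * (inverse (- sqrt (1 - (\<sigma> u)\<^sup>2)) * (- (1 + u\<^sup>2) / (2 * sqrt k * u\<^sup>2)))) (at u)"
      unfolding \<Phi>_def[abs_def] using DERIV_chain2[OF dA DERIV_chain2[OF darc dsig]] by simp
    have cs: "cos (arccos (\<sigma> u)) = \<sigma> u" using s0 by (intro cos_arccos) auto
    have sk: "(sqrt k)\<^sup>2 = k" using k by simp
    have e1: "1 + k * (\<sigma> u)\<^sup>2 = ((1 + u\<^sup>2) / (2 * u))\<^sup>2"
      proof -
      have sk2: "\<And>c. sqrt k * (sqrt k * c) = k * c" using k by (simp add: mult.assoc[symmetric])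
      show ?thesis unfolding \<sigma>_def using u0 k sk by (simp add: field_simps power2_eq_square) (simp add: sk2)
    qed
    have e2: "1 - (\<sigma> u)\<^sup>2 = (4 * k * u\<^sup>2 - (1 - u\<^sup>2)\<^sup>2) / (2 * sqrt k * u)\<^sup>2"
      unfolding \<sigma>_def using u0 k sk by (simp add: field_simps power2_eq_square)
    have Dpos: "0 < 4 * k * u\<^sup>2 - (1 - u\<^sup>2)\<^sup>2"
    proof -
      have "0 < 1 - (\<sigma> u)\<^sup>2" using s0 by (simp add: power2_eq_square) (metis less_eq_real_def mult_le_one s0(2) s0(1) linorder_not_le mult_strict_mono' zero_le_one mult_1)
      then show ?thesis using e2 u0 k by (simp add: zero_less_divide_iff)
    qed
    have q1: "sqrt (1 + k * (\<sigma> u)\<^sup>2) = (1 + u\<^sup>2) / (2 * u)" using e1 u0 by simp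
    have q2: "sqrt (1 - (\<sigma> u)\<^sup>2) = sqrt (4 * k * u\<^sup>2 - (1 - u\<^sup>2)\<^sup>2) / (2 * sqrt k * u)"
      using e2 u0 k by (simp add: real_sqrt_divide)
    have "1 / sqrt (1 + k * (cos (arccos (\<sigma> u)))\<^sup>2) * (inverse (- sqrt (1 - (\<sigma> u)\<^sup>2)) * (- (1 + u\<^sup>2) / (2 * sqrt k * u\<^sup>2)))
       = 2 / sqrt (4 * k * u\<^sup>2 - (1 - u\<^sup>2)\<^sup>2)"
      unfolding cs q1 q2 using u0 k Dpos by (intro alg1) (auto simp: add_pos_nonneg)
    with chain show ?thesis by (simp add: has_real_derivative_iff_has_vector_derivative)
  qed
  have "((\<lambda>u. 2 / sqrt (4 * k * u\<^sup>2 - (1 - u\<^sup>2)\<^sup>2)) has_integral (\<Phi> r - \<Phi> (r0 k))) {r0 k..r}"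
    by (rule fundamental_theorem_of_calculus_interior[OF r(1) cont der])
  moreover have "\<Phi> (r0 k) = 0" unfolding \<Phi>_def \<sigma>_def sigma_r0[OF k] Aint_def by simp
  ultimately show ?thesis unfolding t_rad_def \<Phi>_def \<sigma>_def by (simp add: integral_unique)
qed




lemma elem_bound:
  fixes a :: real assumes a: "a \<ge> 0"
  shows "0 \<le> 1 / sqrt (1 + a) - 1 + a / 2" "1 / sqrt (1 + a) - 1 + a / 2 \<le> a\<^sup>2"
proof -
  define q where "q = sqrt (1 + a)"
  have q1: "q \<ge> 1" unfolding q_def using a by simp
  have aq: "a = q\<^sup>2 - 1" unfolding q_def using a by simp
  have e: "1 / sqrt (1 + a) - 1 + a / 2 = (q - 1)\<^sup>2 * ((q + 2) / (2 * q))"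
    unfolding q_def[symmetric] aq using q1 by (simp add: field_simps power2_eq_square)
  have "0 \<le> (q - 1)\<^sup>2 * ((q + 2) / (2 * q))" using q1 by simp
  then show "0 \<le> 1 / sqrt (1 + a) - 1 + a / 2" using e by simp
  have "(q + 2) / (2 * q) \<le> (q + 1)\<^sup>2"
  proof -
    have "q + 2 \<le> 2 * q * 4" using q1 by simp
    also have "\<dots> \<le> 2 * q * (q + 1)\<^sup>2"
    proof -
      have "4 \<le> (q+1)\<^sup>2" using q1 power_mono[of 2 "q+1" 2] by simp
      then show ?thesis using q1 by (intro mult_left_mono) auto
    qed
    finally show ?thesis using q1 by (simp add: divide_le_eq mult.commute)
  qed
  then have "(q - 1)\<^sup>2 * ((q + 2) / (2 * q)) \<le> (q - 1)\<^sup>2 * (q + 1)\<^sup>2"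
    by (intro mult_left_mono) auto
  also have "\<dots> = a\<^sup>2" unfolding aq by (simp add: power2_eq_square algebra_simps)
  finally show "1 / sqrt (1 + a) - 1 + a / 2 \<le> a\<^sup>2" using e by simp
qed

lemma cos2_integral:
  fixes p :: real assumes "0 \<le> p"
  shows "((\<lambda>\<theta>. (cos \<theta>)\<^sup>2) has_integral (p + sin p * cos p) / 2) {0..p}"
proof -
  have "((\<lambda>\<theta>. (cos \<theta>)\<^sup>2) has_integral ((\<lambda>\<theta>. (\<theta> + sin \<theta> * cos \<theta>) / 2) p - (\<lambda>\<theta>. (\<theta> + sin \<theta> * cos \<theta>) / 2) 0)) {0..p}"
  proof (rule fundamental_theorem_of_calculus[OF assms])
    fix t :: real
    have "((\<lambda>\<theta>. (\<theta> + sin \<theta> * cos \<theta>) / 2) has_real_derivative (cos t)\<^sup>2) (at t)"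
      apply ((rule derivative_eq_intros refl)+)
      apply (simp only: mult_zero_left mult_zero_right add_0_right mult_1 mult_1_right diff_0_right)
      apply (simp add: power2_eq_square algebra_simps)
    proof -
      have h: "cos t * cos t + sin t * sin t = 1" by (rule sin_cos_squared_add3)
      have "cos t * (cos t * 2) + sin t * (sin t * 2) = 2 * (cos t * cos t + sin t * sin t)" by (simp only: algebra_simps)
      then show "cos t * (cos t * 2) + sin t * (sin t * 2) = 2" by (simp only: h mult_1_right)
    qed
    then show "((\<lambda>\<theta>. (\<theta> + sin \<theta> * cos \<theta>) / 2) has_vector_derivative (cos t)\<^sup>2) (at t within {0..p})"
      by (simp add: has_real_derivative_iff_has_vector_derivative has_vector_derivative_at_within)
  qed
  then show ?thesis by simp
qed

lemma Aint_bound: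
  assumes k: "0 \<le> k" "k \<le> 1" and p: "0 \<le> p"
  shows "\<bar>Aint k p - (p - k / 4 * (p + sin p * cos p))\<bar> \<le> k\<^sup>2 * p"
proof -
  define h where "h \<theta> = 1 / sqrt (1 + k * (cos \<theta>)\<^sup>2) - 1 + k / 2 * (cos \<theta>)\<^sup>2" for \<theta>
  have i1: "((\<lambda>\<theta>. 1 / sqrt (1 + k * (cos \<theta>)\<^sup>2)) has_integral Aint k p) {0..p}"
    unfolding Aint_def by (rule integrable_integral integrable_continuous_real Aint_integrand_cont k)+
  have i2: "((\<lambda>\<theta>. 1::real) has_integral p) {0..p}" using has_integral_const_real[of "1::real" 0 p] p by simp
  have i3: "((\<lambda>\<theta>. k / 2 * (cos \<theta>)\<^sup>2) has_integral k / 2 * ((p + sin p * cos p) / 2)) {0..p}"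
    by (rule has_integral_mult_right cos2_integral p)+
  have ih: "(h has_integral (Aint k p - p + k / 2 * ((p + sin p * cos p) / 2))) {0..p}"
    unfolding h_def by (rule has_integral_add has_integral_diff i1 i2 i3)+
  have hb: "0 \<le> h \<theta> \<and> h \<theta> \<le> k\<^sup>2" for \<theta> :: real
  proof -
    have c: "0 \<le> (cos \<theta>)\<^sup>2" "(cos \<theta>)\<^sup>2 \<le> 1" using abs_cos_le_one[of \<theta>] by (auto simp add: abs_square_le_1)
    have a0: "0 \<le> k * (cos \<theta>)\<^sup>2" using k c by simp
    have "k * (cos \<theta>)\<^sup>2 \<le> k" using k c mult_left_mono[of "(cos \<theta>)\<^sup>2" 1 k] by simp
    then have "(k * (cos \<theta>)\<^sup>2)\<^sup>2 \<le> k\<^sup>2" using a0 power_mono by blast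
    moreover have "h \<theta> = 1 / sqrt (1 + k * (cos \<theta>)\<^sup>2) - 1 + (k * (cos \<theta>)\<^sup>2) / 2" unfolding h_def by simp
    ultimately show ?thesis using elem_bound[OF a0] by linarith
  qed
  have "0 \<le> Aint k p - p + k / 2 * ((p + sin p * cos p) / 2)"
    by (rule has_integral_nonneg[OF ih]) (use hb in auto)
  moreover have "Aint k p - p + k / 2 * ((p + sin p * cos p) / 2) \<le> k\<^sup>2 * p"
    using has_integral_le[OF ih has_integral_const_real[of "k\<^sup>2" 0 p]] hb p by (simp add: mult.commute)
  moreover have eq: "Aint k p - (p - k / 4 * (p + sin p * cos p)) = Aint k p - p + k / 2 * ((p + sin p * cos p) / 2)"
    by (simp add: field_simps)
  moreover have "0 \<le> k\<^sup>2 * p" using p by simp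
  ultimately show ?thesis unfolding eq abs_le_iff by linarith
qed



definition mm :: "real \<Rightarrow> real" where "mm k = 1 / (1 + sqrt (1 + k))"
definition PP :: "real \<Rightarrow> real \<Rightarrow> real \<Rightarrow> real" where
  "PP x y k = (1 + k * (mm k)\<^sup>2 * (x\<^sup>2 + y\<^sup>2))\<^sup>2 - 4 * k * (mm k)\<^sup>2 * y\<^sup>2"
definition SS :: "real \<Rightarrow> real \<Rightarrow> real \<Rightarrow> real" where
  "SS x y k = 2 * mm k * y / sqrt (PP x y k)"

lemma mu0_eq: assumes "k \<ge> 0" shows "mu0 k = sqrt k * mm k"
proof -
  have q: "sqrt (1 + k) > sqrt k" using assms by simp
  have q2: "(sqrt (1 + k))\<^sup>2 = 1 + k" "(sqrt k)\<^sup>2 = k" using assms by auto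
  have d1: "1 - sqrt k + sqrt (1 + k) > 0" using q by linarith
  have d2: "1 + sqrt (1 + k) > 0" using assms by (simp add: add_pos_nonneg)
  have "(1 + sqrt k - sqrt (1 + k)) * (1 + sqrt (1 + k)) = sqrt k * (1 - sqrt k + sqrt (1 + k))"
    using q2 by (simp add: algebra_simps power2_eq_square)
  then show ?thesis unfolding mu0_def mm_def using d1 d2 by (simp add: field_simps)
qed

lemma mm0: "mm 0 = 1/2" unfolding mm_def by simp
lemma PP0: "PP x y 0 = 1" unfolding PP_def by simp
lemma SS0: "SS x y 0 = y" unfolding SS_def by (simp add: PP0 mm0)

lemma dmm: "(mm has_real_derivative -1/8) (at 0)"
proof -
  have ds: "((\<lambda>k. sqrt (1 + k)) has_real_derivative inverse (sqrt (1 + 0)) / 2 * (0 + 1)) (at 0)"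
    by (rule DERIV_chain2[OF DERIV_real_sqrt]) (auto intro!: derivative_eq_intros)
  have "((\<lambda>k. 1 / (1 + sqrt (1 + k))) has_real_derivative -1/8) (at 0)"
    apply ((rule ds derivative_eq_intros refl)+)
    apply (simp_all)
    done
  then show ?thesis unfolding mm_def[abs_def] .
qed

lemma dPP: "(PP x y has_real_derivative (x\<^sup>2 - y\<^sup>2) / 2) (at 0)"
proof -
  have "((\<lambda>k. (1 + k * (mm k)\<^sup>2 * (x\<^sup>2 + y\<^sup>2))\<^sup>2 - 4 * k * (mm k)\<^sup>2 * y\<^sup>2) has_real_derivative (x\<^sup>2 - y\<^sup>2) / 2) (at 0)"
    apply ((rule derivative_eq_intros dmm refl)+)
    apply (simp add: mm0 power2_eq_square field_simps)
    done
  then show ?thesis unfolding PP_def[abs_def] .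
qed

lemma dSS: "(SS x y has_real_derivative - y * (1 + x\<^sup>2 - y\<^sup>2) / 4) (at 0)"
proof -
  have ds: "((\<lambda>k. sqrt (PP x y k)) has_real_derivative inverse (sqrt (PP x y 0)) / 2 * ((x\<^sup>2 - y\<^sup>2) / 2)) (at 0)"
    by (rule DERIV_chain2[OF DERIV_real_sqrt dPP]) (simp add: PP0)
  have "((\<lambda>k. 2 * mm k * y / sqrt (PP x y k)) has_real_derivative - y * (1 + x\<^sup>2 - y\<^sup>2) / 4) (at 0)"
    apply ((rule ds dmm derivative_eq_intros refl)+)
    apply (simp_all add: mm0 PP0 power2_eq_square field_simps)
    done
  then show ?thesis unfolding SS_def[abs_def] .
qed




lemma mm_pos: "k \<ge> 0 \<Longrightarrow> mm k > 0" unfolding mm_def by (simp add: add_pos_nonneg)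

lemma alg2: fixes a b s :: real assumes "a > 0" "b > 0" "s > 0"
  shows "(1 - (a / b)\<^sup>2) / (2 * s * (a / b)) = (b\<^sup>2 - a\<^sup>2) / (2 * s * a * b)"
  using assms by (simp add: field_simps power2_eq_square)

lemma rho_facts:
  assumes k: "k > 0" and y: "y > 0" and P: "PP x y k > 0"
  defines "\<rho> \<equiv> cmod (ginv (complex_of_real (mu0 k) * Complex x y))"
  shows "0 < \<rho>" "\<rho> < 1" "(1 - \<rho>\<^sup>2) / (2 * sqrt k * \<rho>) = SS x y k"
proof -
  define m where "m = mm k"
  define s where "s = sqrt k"
  define \<mu> where "\<mu> = s * m"
  have m0: "m > 0" unfolding m_def using mm_pos k by simp
  have s0: "s > 0" unfolding s_def using k by simp
  have ss: "s\<^sup>2 = k" unfolding s_def using k by simp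
  have mu: "mu0 k = \<mu>" unfolding \<mu>_def s_def m_def using mu0_eq k by simp
  have mu0: "\<mu> > 0" unfolding \<mu>_def using m0 s0 by simp
  define N where "N = (\<mu> * x)\<^sup>2 + (1 - \<mu> * y)\<^sup>2"
  define M where "M = (\<mu> * x)\<^sup>2 + (1 + \<mu> * y)\<^sup>2"
  have w: "complex_of_real \<mu> * Complex x y = Complex (\<mu> * x) (\<mu> * y)"
    by (simp add: complex_eq_iff)
  have cN: "cmod (\<i> - Complex (\<mu> * x) (\<mu> * y)) = sqrt N"
    unfolding N_def cmod_def by (simp add: power2_eq_square algebra_simps)
  have cM: "cmod (\<i> + Complex (\<mu> * x) (\<mu> * y)) = sqrt M"
    unfolding M_def cmod_def by (simp add: power2_eq_square algebra_simps)
  have rho: "\<rho> = sqrt N / sqrt M"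
    unfolding \<rho>_def mu w ginv_def norm_divide cN cM ..
  have M0: "M > 0" unfolding M_def using mu0 y
    by (metis add_nonneg_pos zero_le_power2 add_pos_pos mult_pos_pos zero_less_one zero_less_power2 less_numeral_extra(3) order_less_irrefl)
  have NM: "N * M = PP x y k"
  proof -
    have hm: "\<mu>\<^sup>2 = k * m\<^sup>2" unfolding \<mu>_def using ss by (simp add: power_mult_distrib)
    define A where "A = 1 + \<mu>\<^sup>2 * (x\<^sup>2 + y\<^sup>2)"
    have e1: "N = A - 2 * \<mu> * y" and e2: "M = A + 2 * \<mu> * y" unfolding N_def M_def A_def
      by (simp_all add: power2_eq_square algebra_simps)
    have "N * M = A\<^sup>2 - 4 * \<mu>\<^sup>2 * y\<^sup>2" unfolding e1 e2 by (simp add: power2_eq_square algebra_simps)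
    also have "\<dots> = PP x y k" unfolding A_def hm PP_def m_def by (simp add: mult.assoc)
    finally show ?thesis .
  qed
  have N0: "N > 0" using NM P M0 by (metis zero_less_mult_pos2)
  show "0 < \<rho>" unfolding rho using N0 M0 by simp
  have "N < M" unfolding N_def M_def using mu0 y by (simp add: power2_eq_square algebra_simps)
  then show "\<rho> < 1" unfolding rho using N0 M0 by simp
  have MN: "M - N = 4 * \<mu> * y" unfolding N_def M_def by (simp add: power2_eq_square algebra_simps)
  have sq: "sqrt (PP x y k) = sqrt N * sqrt M" using NM[symmetric] by (simp add: real_sqrt_mult)
  have r2: "\<rho>\<^sup>2 = N / M" unfolding rho using N0 M0 by (simp add: power_divide)
  have "(1 - \<rho>\<^sup>2) / (2 * sqrt k * \<rho>) = (M - N) / (2 * s * sqrt N * sqrt M)"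
    unfolding rho s_def[symmetric] using N0 M0 s0 alg2[of "sqrt N" "sqrt M" s] by simp
  also have "\<dots> = 2 * m * y / sqrt (PP x y k)"
    unfolding MN sq \<mu>_def using s0 N0 M0 by (simp add: field_simps)
  finally show "(1 - \<rho>\<^sup>2) / (2 * sqrt k * \<rho>) = SS x y k" unfolding SS_def m_def .
qed

lemma r0_le:
  assumes k: "k > 0" and r: "0 < r" and sig: "(1 - r\<^sup>2) / (2 * sqrt k * r) < 1"
  shows "r0 k \<le> r"
proof (rule ccontr)
  assume "\<not> r0 k \<le> r"
  then have "r < r0 k" by simp
  moreover have "0 < r + sqrt k + sqrt (k + 1)" using r k by (smt (verit) real_sqrt_ge_zero)
  ultimately have "(r - r0 k) * (r + sqrt k + sqrt (k + 1)) < 0" by (simp add: mult_neg_pos)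
  then have "2 * sqrt k * r < 1 - r\<^sup>2" using r0_ident[of k r] k by simp
  then have "1 < (1 - r\<^sup>2) / (2 * sqrt k * r)" using r k by simp
  then show False using sig by simp
qed




lemma main_analysis:
  fixes x y :: real
  assumes y0: "0 < y" and y1: "y < 1"
  defines "D \<equiv> 1/4 * (x\<^sup>2 * y / sqrt (1 - y\<^sup>2) - arccos y)"
  defines "g \<equiv> (\<lambda>k. if k = 0 then arccos y else t_xy k x y)"
  shows "(\<forall>\<^sub>F k in at_right 0.
        r0 k \<le> cmod (ginv (complex_of_real (mu0 k) * Complex x y)) \<and>
        cmod (ginv (complex_of_real (mu0 k) * Complex x y)) < 1)"
    and "((\<lambda>k. (g k - g 0) / (k - 0)) \<longlongrightarrow> D) (at_right 0)"
proof -
  have SSt: "(SS x y \<longlongrightarrow> y) (at_right 0)"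
    using DERIV_isCont[OF dSS[of x y]] SS0[of x y] unfolding isCont_def
    by (metis tendsto_mono at_le subset_UNIV)
  have PPt: "(PP x y \<longlongrightarrow> 1) (at_right 0)"
    using DERIV_isCont[OF dPP[of x y]] PP0[of x y] unfolding isCont_def
    by (metis tendsto_mono at_le subset_UNIV)
  have ev: "\<forall>\<^sub>F k in at_right 0. 0 < k \<and> k < 1 \<and> 0 < PP x y k \<and> 0 < SS x y k \<and> SS x y k < 1"
  proof -
    have "\<forall>\<^sub>F k in at_right 0. k \<in> {0<..<(1::real)}" by (rule eventually_at_right_real) simp
    moreover have "\<forall>\<^sub>F k in at_right 0. 0 < PP x y k" using order_tendstoD(1)[OF PPt, of 0] by simp
    moreover have "\<forall>\<^sub>F k in at_right 0. 0 < SS x y k" using order_tendstoD(1)[OF SSt y0] .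
    moreover have "\<forall>\<^sub>F k in at_right 0. SS x y k < 1" using order_tendstoD(2)[OF SSt y1] .
    ultimately show ?thesis by eventually_elim auto
  qed
  define rho where "rho k = cmod (ginv (complex_of_real (mu0 k) * Complex x y))" for k
  have key: "r0 k \<le> rho k \<and> rho k < 1 \<and> g k = Aint k (arccos (SS x y k))"
    if k: "0 < k" "k < 1" "0 < PP x y k" "0 < SS x y k" "SS x y k < 1" for k
  proof -
    have f: "0 < rho k" "rho k < 1" "(1 - (rho k)\<^sup>2) / (2 * sqrt k * rho k) = SS x y k"
      using rho_facts[OF k(1) y0 k(3)] unfolding rho_def by auto
    have r0: "r0 k \<le> rho k" using r0_le[OF k(1) f(1)] f(3) k(5) by simp
    have "g k = t_rad k (rho k)" unfolding g_def t_xy_def rho_def using k by simp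
    also have "\<dots> = Aint k (arccos (SS x y k))" using t_rad_eq[OF k(1) r0 f(2)] f(3) by simp
    finally show ?thesis using r0 f by simp
  qed
  show "\<forall>\<^sub>F k in at_right 0. r0 k \<le> cmod (ginv (complex_of_real (mu0 k) * Complex x y)) \<and>
        cmod (ginv (complex_of_real (mu0 k) * Complex x y)) < 1"
    using ev by eventually_elim (use key in \<open>auto simp: rho_def\<close>)
  define Th where "Th k = arccos (SS x y k)" for k
  define E where "E k = Th k - k / 4 * (Th k + sin (Th k) * cos (Th k))" for k
  have sy: "sqrt (1 - y\<^sup>2) > 0" using y0 y1 by (simp add: power2_less_1_iff abs_less_iff) 
  have dTh: "(Th has_real_derivative inverse (- sqrt (1 - y\<^sup>2)) * (- y * (1 + x\<^sup>2 - y\<^sup>2) / 4)) (at 0)"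
  proof -
    have da: "DERIV arccos (SS x y 0) :> inverse (- sqrt (1 - (SS x y 0)\<^sup>2))"
      using SS0[of x y] y0 y1 by (intro DERIV_arccos) simp_all
    show ?thesis unfolding Th_def[abs_def] using DERIV_chain2[OF da dSS[of x y]] SS0[of x y] by simp
  qed
  have Th0: "Th 0 = arccos y" unfolding Th_def SS0 ..
  have dE: "(E has_real_derivative D) (at 0)"
  proof -
    define h where "h k = Th k + sin (Th k) * cos (Th k)" for k
    have "\<exists>d. (h has_real_derivative d) (at 0)"
      unfolding h_def[abs_def] by (rule exI, (rule dTh derivative_intros)+)
    then obtain d where dh: "(h has_real_derivative d) (at 0)" by blast
    have Eh: "E = (\<lambda>k. Th k - k * (h k / 4))" unfolding E_def[abs_def] h_def by (simp add: field_simps)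
    have "(E has_real_derivative inverse (- sqrt (1 - y\<^sup>2)) * (- y * (1 + x\<^sup>2 - y\<^sup>2) / 4)
         - (1 * (h 0 / 4) + (d / 4) * 0)) (at 0)"
      unfolding Eh by (intro DERIV_diff dTh DERIV_mult DERIV_ident DERIV_cdivide dh)
    then have "(E has_real_derivative inverse (- sqrt (1 - y\<^sup>2)) * (- y * (1 + x\<^sup>2 - y\<^sup>2) / 4)
         - (1/4 * (Th 0 + sin (Th 0) * cos (Th 0)))) (at 0)" unfolding h_def by simp
    moreover have "inverse (- sqrt (1 - y\<^sup>2)) * (- y * (1 + x\<^sup>2 - y\<^sup>2) / 4)
         - (1/4 * (Th 0 + sin (Th 0) * cos (Th 0))) = D"
    proof -
      have s: "sin (arccos y) = sqrt (1 - y\<^sup>2)" "cos (arccos y) = y" using y0 y1 by (auto intro!: sin_arccos cos_arccos)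
      have "y\<^sup>2 < 1" using y0 y1 power_strict_mono[of y 1 2] by simp
      then have q: "(sqrt (1 - y\<^sup>2))\<^sup>2 = 1 - y\<^sup>2" by simp
      show ?thesis unfolding Th0 s D_def using sy q
        by (simp add: field_simps)
    qed
    ultimately show ?thesis by simp
  qed
  have E0: "E 0 = arccos y" unfolding E_def Th0 by simp
  have g0: "g 0 = arccos y" unfolding g_def by simp
  have bnd: "\<forall>\<^sub>F k in at_right 0. norm ((g k - E k) / (k - 0)) \<le> pi * k"
    using ev
  proof eventually_elim
    case (elim k)
    then have kk: "0 < k" "k < 1" by auto
    have gk: "g k = Aint k (Th k)" using key[of k] elim unfolding Th_def by auto
    have th: "0 \<le> Th k" "Th k \<le> pi" unfolding Th_def using elim
      by (auto intro!: arccos_lbound arccos_ubound)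
    have "\<bar>g k - E k\<bar> \<le> k\<^sup>2 * Th k" unfolding gk E_def using Aint_bound[of k "Th k"] kk th by simp
    also have "\<dots> \<le> k\<^sup>2 * pi" using th by (intro mult_left_mono) auto
    finally have "\<bar>g k - E k\<bar> \<le> k\<^sup>2 * pi" .
    then show ?case using kk by (simp add: abs_divide divide_le_eq power2_eq_square mult.commute mult.left_commute)
  qed
  have lim0: "((\<lambda>k. (g k - E k) / (k - 0)) \<longlongrightarrow> 0) (at_right 0)"
  proof (rule Lim_null_comparison[OF bnd])
    have "((\<lambda>k::real. pi * k) \<longlongrightarrow> pi * 0) (at_right 0)" by (intro tendsto_intros)
    then show "((\<lambda>k::real. pi * k) \<longlongrightarrow> 0) (at_right 0)" by simp
  qed
  have limE: "((\<lambda>k. (E k - E 0) / (k - 0)) \<longlongrightarrow> D) (at_right 0)"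
    using dE unfolding has_field_derivative_iff by (metis tendsto_mono at_le subset_UNIV)
  have "((\<lambda>k. (E k - E 0) / (k - 0) + (g k - E k) / (k - 0)) \<longlongrightarrow> D + 0) (at_right 0)"
    by (rule tendsto_add[OF limE lim0])
  moreover have "(E k - E 0) / (k - 0) + (g k - E k) / (k - 0) = (g k - g 0) / (k - 0)" for k
    using E0 g0 by (simp add: diff_divide_distrib)
  ultimately show "((\<lambda>k. (g k - g 0) / (k - 0)) \<longlongrightarrow> D) (at_right 0)" by simp
qed




lemma t_sin_nonneg: "\<bar>t\<bar> \<le> pi \<Longrightarrow> 0 \<le> t * sin (t::real)"
proof (cases "t \<ge> 0")
  case True
  assume "\<bar>t\<bar> \<le> pi" then have "0 \<le> sin t" using True by (intro sin_ge_zero) auto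
  then show ?thesis using True by simp
next
  case False
  assume "\<bar>t\<bar> \<le> pi" then have "0 \<le> sin (-t)" using False by (intro sin_ge_zero) auto
  then show ?thesis using False by (simp add: mult_nonpos_nonpos)
qed

lemma arccos_cos_abs: "\<bar>t\<bar> \<le> pi \<Longrightarrow> arccos (cos t) = \<bar>t\<bar>"
  by (metis abs_ge_zero abs_of_nonneg abs_of_nonpos arccos_cos cos_minus linorder_le_cases)

lemma wF_eq: assumes "- (pi/2) < t" "t < pi/2" shows "wF a t = wJ a (cos t)"
proof -
  have "sqrt (1 - (cos t)\<^sup>2) = \<bar>sin t\<bar>" by (simp add: sin_squared_eq [symmetric])
  moreover have "arccos (cos t) = \<bar>t\<bar>" using assms by (intro arccos_cos_abs) auto
  moreover have "\<bar>sin t\<bar> * \<bar>t\<bar> = t * sin t"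
    using t_sin_nonneg[of t] assms by (simp add: abs_mult[symmetric] mult.commute)
  ultimately show ?thesis unfolding wF_def wJ_def by simp
qed

lemma wS_eq: assumes "0 < t" "t < pi" shows "wS a t = wJ a (sin t)"
proof -
  have "sqrt (1 - (sin t)\<^sup>2) = \<bar>cos t\<bar>" by (simp add: cos_squared_eq [symmetric])
  moreover have "arccos (sin t) = \<bar>pi/2 - t\<bar>" using assms
  proof -
    have "sin t = cos (pi/2 - t)" by (simp add: cos_sin_eq)
    then show ?thesis using assms by (simp add: arccos_cos_abs)
  qed
  moreover have "\<bar>cos t\<bar> * \<bar>pi/2 - t\<bar> = (pi/2 - t) * cos t"
    using t_sin_nonneg[of "pi/2 - t"] assms by (simp add: abs_mult[symmetric] mult.commute sin_cos_eq)
  ultimately show ?thesis unfolding wS_def wJ_def by (simp add: algebra_simps)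
qed

lemma wF_jac: fixes a t :: real shows "deriv (\<lambda>a'. deriv (\<lambda>a''. wF a'' t) a') a
              + deriv (\<lambda>t'. deriv (\<lambda>t''. wF a t'') t') t + wF a t = 0"
proof -
  have d1: "(\<lambda>a'. deriv (\<lambda>a''. wF a'' t) a') = (\<lambda>a'. - (a' * cos t) / 2)"
  proof
    fix a' show "deriv (\<lambda>a''. wF a'' t) a' = - (a' * cos t) / 2"
      unfolding wF_def by (rule DERIV_imp_deriv, (rule derivative_eq_intros refl)+, simp only: mult_zero_left mult_zero_right add_0_right mult_1, simp)
  qed
  have d1': "deriv (\<lambda>a'::real. - (a' * cos t) / 2) a = - cos t / 2"
    by (rule DERIV_imp_deriv, (rule derivative_eq_intros refl)+, simp only: mult_zero_left mult_zero_right add_0_right mult_1, simp)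
  have d2: "(\<lambda>t'. deriv (\<lambda>t''. wF a t'') t') = (\<lambda>t'. (1/4) * (sin t' + t' * cos t' + a\<^sup>2 * sin t'))"
  proof
    fix t' show "deriv (\<lambda>t''. wF a t'') t' = (1/4) * (sin t' + t' * cos t' + a\<^sup>2 * sin t')"
      unfolding wF_def by (rule DERIV_imp_deriv, (rule derivative_eq_intros refl)+, simp add: algebra_simps)
  qed
  have d2': "deriv (\<lambda>t'. (1/4) * (sin t' + t' * cos t' + a\<^sup>2 * sin t')) t
     = (1/4) * (2 * cos t - t * sin t + a\<^sup>2 * cos t)"
    by (rule DERIV_imp_deriv, (rule derivative_eq_intros refl)+, simp add: algebra_simps)
  show ?thesis unfolding d1 d1' d2 d2' by (simp add: wF_def algebra_simps)
qed

lemma wS_jac: fixes a t :: real shows "deriv (\<lambda>a'. deriv (\<lambda>a''. wS a'' t) a') a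
              + deriv (\<lambda>t'. deriv (\<lambda>t''. wS a t'') t') t + wS a t = 0"
proof -
  have d1: "(\<lambda>a'. deriv (\<lambda>a''. wS a'' t) a') = (\<lambda>a'. - (a' * sin t) / 2)"
  proof
    fix a' show "deriv (\<lambda>a''. wS a'' t) a' = - (a' * sin t) / 2"
      unfolding wS_def by (rule DERIV_imp_deriv, (rule derivative_eq_intros refl)+, simp only: mult_zero_left mult_zero_right add_0_right mult_1, simp)
  qed
  have d1': "deriv (\<lambda>a'::real. - (a' * sin t) / 2) a = - sin t / 2"
    by (rule DERIV_imp_deriv, (rule derivative_eq_intros refl)+, simp only: mult_zero_left mult_zero_right add_0_right mult_1, simp)
  have d2: "(\<lambda>t'. deriv (\<lambda>t''. wS a t'') t') = (\<lambda>t'. (1/8) * (- 2 * cos t' - (pi - 2 * t') * sin t' - 2 * a\<^sup>2 * cos t'))"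
  proof
    fix t' show "deriv (\<lambda>t''. wS a t'') t' = (1/8) * (- 2 * cos t' - (pi - 2 * t') * sin t' - 2 * a\<^sup>2 * cos t')"
      unfolding wS_def by (rule DERIV_imp_deriv, (rule derivative_eq_intros refl)+, simp add: algebra_simps)
  qed
  have d2': "deriv (\<lambda>t'. (1/8) * (- 2 * cos t' - (pi - 2 * t') * sin t' - 2 * a\<^sup>2 * cos t')) t
     = (1/8) * (2 * sin t + 2 * sin t - (pi - 2 * t) * cos t + 2 * a\<^sup>2 * sin t)"
    by (rule DERIV_imp_deriv, (rule derivative_eq_intros refl)+, simp add: algebra_simps)
  show ?thesis unfolding d1 d1' d2 d2' by (simp add: wS_def algebra_simps)
qed




theorem mainTheorem8:
  fixes x y :: real
  assumes "0 < y" and "y < 1"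
  shows
    "(\<forall>\<^sub>F k in at_right 0.
        r0 k \<le> cmod (ginv (complex_of_real (mu0 k) * Complex x y)) \<and>
        cmod (ginv (complex_of_real (mu0 k) * Complex x y)) < 1)
     \<and> (\<lambda>k. t_xy k x y - (arccos y + k / 4 * (x\<^sup>2 * y / sqrt (1 - y\<^sup>2) - arccos y)))
          \<in> o[at_right 0](\<lambda>k. k)
     \<and> ((\<lambda>k. Phi k x y) \<longlongrightarrow> Phi 0 x y) (at_right 0)
     \<and> (\<exists>V. ((\<lambda>k. Phi k x y) has_vector_derivative V) (at 0 within {0..})
            \<and> hprod y V (nu y) = wJ x y)
     \<and> (\<forall>a t. - (pi/2) < t \<and> t < pi/2 \<longrightarrow>
            wF a t = wJ a (cos t)
            \<and> deriv (\<lambda>a'. deriv (\<lambda>a''. wF a'' t) a') a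
              + deriv (\<lambda>t'. deriv (\<lambda>t''. wF a t'') t') t + wF a t = 0)
     \<and> (\<forall>a t. 0 < t \<and> t < pi \<longrightarrow>
            wS a t = wJ a (sin t)
            \<and> deriv (\<lambda>a'. deriv (\<lambda>a''. wS a'' t) a') a
              + deriv (\<lambda>t'. deriv (\<lambda>t''. wS a t'') t') t + wS a t = 0)"
proof -
  define D where "D = 1/4 * (x\<^sup>2 * y / sqrt (1 - y\<^sup>2) - arccos y)"
  define g where "g = (\<lambda>k. if k = 0 then arccos y else t_xy k x y)"
  note MA = main_analysis[OF assms, of x]
  have MA2: "((\<lambda>k. (g k - g 0) / (k - 0)) \<longlongrightarrow> D) (at_right 0)"
    using MA(2) unfolding g_def D_def .
  have gder: "(g has_real_derivative D) (at 0 within {0..})"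
    unfolding has_field_derivative_iff at_within_Ici_at_right by (rule MA2)
  have Phig: "(\<lambda>k. Phi k x y) = (\<lambda>k. (x, y, g k))" unfolding Phi_def g_def by auto
  have vd: "((\<lambda>k. Phi k x y) has_vector_derivative (0, 0, D)) (at 0 within {0..})"
    unfolding Phig
    by (intro has_vector_derivative_Pair has_vector_derivative_const
        gder[unfolded has_real_derivative_iff_has_vector_derivative])
  have lim: "((\<lambda>k. Phi k x y) \<longlongrightarrow> Phi 0 x y) (at_right 0)"
    using has_vector_derivative_continuous[OF vd] unfolding continuous_within at_within_Ici_at_right .
  have sy: "sqrt (1 - y\<^sup>2) > 0"
  proof -
    have "y\<^sup>2 < 1" using assms power_strict_mono[of y 1 2] by simp
    then show ?thesis by simp
  qed
  have hp: "hprod y (0, 0, D) (nu y) = wJ x y"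
    unfolding hprod_def nu_def wJ_def D_def using sy by (simp add: field_simps)
  have lo: "(\<lambda>k. t_xy k x y - (arccos y + k / 4 * (x\<^sup>2 * y / sqrt (1 - y\<^sup>2) - arccos y)))
          \<in> o[at_right 0](\<lambda>k. k)"
  proof (rule smalloI_tendsto)
    have "((\<lambda>k. (g k - g 0) / (k - 0) - D) \<longlongrightarrow> D - D) (at_right 0)"
      by (intro tendsto_diff MA2 tendsto_const)
    then have *: "((\<lambda>k. (g k - g 0) / (k - 0) - D) \<longlongrightarrow> 0) (at_right 0)" by simp
    show "((\<lambda>k. (t_xy k x y - (arccos y + k / 4 * (x\<^sup>2 * y / sqrt (1 - y\<^sup>2) - arccos y))) / k) \<longlongrightarrow> 0) (at_right 0)"
    proof (rule tendsto_cong[THEN iffD1, OF _ *])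
      show "\<forall>\<^sub>F k in at_right 0. (g k - g 0) / (k - 0) - D =
          (t_xy k x y - (arccos y + k / 4 * (x\<^sup>2 * y / sqrt (1 - y\<^sup>2) - arccos y))) / k"
        using eventually_at_right_less[of "0::real"]
      proof eventually_elim
        case (elim k)
        then show ?case unfolding g_def D_def by (simp add: field_simps)
      qed
    qed
    show "\<forall>\<^sub>F k in at_right 0. (k::real) \<noteq> 0"
      using eventually_at_right_less[of "0::real"] by eventually_elim simp
  qed
  show ?thesis
    using MA(1) lo lim vd hp wF_eq wF_jac wS_eq wS_jac by blast
qed


end
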